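(* For every $k\in\mathbb{N}_+$ and $x\in(0,\infty)$: (1) $\mathcal{M}_{k,k}(x)\cdot\mathcal{M}_{k,k}\big(1/s(x)\big)=1$; (2) $\mathcal{M}_{k+1,k}(x)\cdot\mathcal{M}_{k+1,k}(x^{-1})=1$.
   Context: For $x>0$, $\omega=\sqrt{8x+1}$, $c(x)=\frac{(\omega+3)^2}{16}$, $d(x)=\frac{(\omega+3)^2}{8(\omega+1)}$, $s(x)=\frac{(\omega-1)^2}{4(\omega+7)}$; $s_0=\mathrm{id}$, $s_{-1}(x)=1/s(1/x)$, $s_i=s\circ s_{i-1}$, $s_{-i}=s_{-1}\circ s_{-(i-1)}$ ($i\in\mathbb{N}_+$); $c_j=c\circ s_j$, $d_j=d\circ s_j$. Product convention: $\prod_{i=0}^kh_i=h_0\cdots h_k$ for $k\ge0$, $=1$ for $k=-1$, $=h_{k+1}^{-1}\cdots h_{-1}^{-1}$ for $k\le-2$. Let $m^{\rm def}(x)$, $n^{\rm def}(x)$ be the sequences with $m^{\rm def}_{k+1}(x)-m^{\rm def}_k(x)=\prod_{i=0}^k(c_i(x)-1)$, $\lim_{k\to-\infty}m^{\rm def}_k(x)=0$, and $n^{\rm def}_k(x)-n^{\rm def}_{k+1}(x)=x\prod_{i=0}^k(d_i(x)-1)$, $\lim_{k\to\infty}n^{\rm def}_k(x)=0$ (these are the $m,n$ components of the unique positive ABMN solution with $m_{-\infty}=n_\infty=0$, $m_0-m_{-1}=1$ and central ratio $x$). For $p\in\mathbb{N}_+$, $r\in\mathbb{N}_+$, the finite-trail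 Mina margin map is $\mathcal{M}_{p,r}(x)=\frac{n^{\rm def}_{-p}(x)-n^{\rm def}_{r}(x)}{m^{\rm def}_{r}(x)-m^{\rm def}_{-p}(x)}$ (equivalently, this ratio for any ABMN solution on $\llbracket -p+1,r-1\rrbracket$ with central ratio $x$). *)

theory Defs
  imports Complex_Main
begin

definition omg :: "real \<Rightarrow> real" where
  "omg x = sqrt (8 * x + 1)"

definition cfun :: "real \<Rightarrow> real" where
  "cfun x = (omg x + 3)^2 / 16"

definition dfun :: "real \<Rightarrow> real" where
  "dfun x = (omg x + 3)^2 / (8 * (omg x + 1))"

definition sfun :: "real \<Rightarrow> real" where
  "sfun x = (omg x - 1)^2 / (4 * (omg x + 7))"

definition sneg :: "real \<Rightarrow> real" where
  "sneg x = 1 / sfun (1 / x)"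

definition siter :: "int \<Rightarrow> real \<Rightarrow> real" where
  "siter i x = (if 0 \<le> i then (sfun ^^ nat i) x else (sneg ^^ nat (- i)) x)"

definition cj :: "int \<Rightarrow> real \<Rightarrow> real" where
  "cj j x = cfun (siter j x)"

definition dj :: "int \<Rightarrow> real \<Rightarrow> real" where
  "dj j x = dfun (siter j x)"

definition prodc :: "(int \<Rightarrow> real) \<Rightarrow> int \<Rightarrow> real" where
  "prodc h k = (if 0 \<le> k then (\<Prod>i\<in>{0..k}. h i)
                else if k = -1 then 1
                else (\<Prod>i\<in>{k+1..-1}. inverse (h i)))"

definition mdef :: "real \<Rightarrow> int \<Rightarrow> real" where
  "mdef x = (THE m. (\<forall>k. m (k + 1) - m k = prodc (\<lambda>i. cj i x - 1) k)
                    \<and> (m \<longlongrightarrow> 0) at_bot)"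

definition ndef :: "real \<Rightarrow> int \<Rightarrow> real" where
  "ndef x = (THE n. (\<forall>k. n k - n (k + 1) = x * prodc (\<lambda>i. dj i x - 1) k)
                    \<and> (n \<longlongrightarrow> 0) at_top)"

definition Mina :: "nat \<Rightarrow> nat \<Rightarrow> real \<Rightarrow> real" where
  "Mina p r x = (ndef x (- int p) - ndef x (int r)) / (mdef x (int r) - mdef x (- int p))"

end

theory Submission
  imports Defs
begin


lemma omg_facts: assumes "z > 0" shows "omg z > 1" "(omg z)^2 = 8*z+1"
proof -
  have "8*z+1 > 1" using assms by simp
  then show "omg z > 1" unfolding omg_def by (simp add: real_less_rsqrt)
  show "(omg z)^2 = 8*z+1" unfolding omg_def using assms by simp
qed

lemma uform: assumes "z > 0"
  shows "omg z - 1 > 0" "z = (omg z - 1)*(omg z + 1)/8" "sfun z = (omg z - 1)^2/(4*(omg z + 7))"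
        "cfun z - 1 = (omg z - 1)*(omg z + 7)/16"
        "dfun z - 1 = (omg z - 1)^2/(8*(omg z + 1))"
proof -
  define u where "u = omg z - 1"
  have w: "omg z = u + 1" unfolding u_def by simp
  show "omg z - 1 > 0" using omg_facts[OF assms] by simp
  then have u0: "u > 0" using u_def by simp
  have "(u+1)^2 = 8*z+1" using omg_facts(2)[OF assms] w by simp
  then show "z = (omg z - 1)*(omg z + 1)/8" unfolding w by (simp add: algebra_simps power2_eq_square)
  show "sfun z = (omg z - 1)^2/(4*(omg z + 7))" unfolding sfun_def by simp
  show "cfun z - 1 = (omg z - 1)*(omg z + 7)/16" unfolding cfun_def w by (simp add: field_simps power2_eq_square)
  have "u + 2 \<noteq> 0" using u0 by simp
  then show "dfun z - 1 = (omg z - 1)^2/(8*(omg z + 1))" unfolding dfun_def w by (simp add: field_simps power2_eq_square)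
qed

lemma omg_inv_s: assumes "z > 0" shows "omg (1 / sfun z) - 1 = 16 / (omg z - 1)"
proof -
  define u where "u = omg z - 1"
  define b where "b = omg z + 7"
  have u0: "u > 0" using uform[OF assms] u_def by simp
  have b0: "b > 0" "b = u + 8" using u0 unfolding u_def b_def by auto
  have "8 * (1 / sfun z) + 1 = 32*b/u^2 + 1" unfolding uform(3)[OF assms, folded u_def b_def] 
    using u0 b0 by (simp add: field_simps)
  also have "\<dots> = ((u + 16) / u)^2" using u0 b0(1) apply (simp add: field_simps)
    unfolding b0(2) by (simp add: algebra_simps power2_eq_square)
  finally have "8 * (1 / sfun z) + 1 = ((u + 16) / u)^2" .
  moreover have "(u + 16) / u \<ge> 0" using u0 by simp
  ultimately have "omg (1 / sfun z) = (u + 16) / u" unfolding omg_def using u0 by simp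
  then show ?thesis unfolding u_def[symmetric] using u0 by (simp add: field_simps)
qed

lemma aux_om: assumes "u > (0::real)" shows "16/u + 1 + 7 = 8*(u+2)/u" "16/u + 1 + 1 = 2*(u+8)/u"
  using assms by (simp_all add: field_simps)

lemma key: assumes "z > 0"
  shows "\<exists>u a b. u > 0 \<and> a > 0 \<and> b > 0 \<and> z = u*a/8 \<and> sfun z = u^2/(4*b) \<and> cfun z - 1 = u*b/16
    \<and> dfun z - 1 = u^2/(8*a)
    \<and> sfun (1/sfun z) = (16/u)^2/(4*(8*a/u))
    \<and> cfun (1/sfun z) - 1 = (16/u)*(8*a/u)/16
    \<and> dfun (1/sfun z) - 1 = (16/u)^2/(8*(2*b/u))"
proof -
  define u where "u = omg z - 1"
  define a where "a = omg z + 1"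
  define b where "b = omg z + 7"
  have u0: "u > 0" using uform(1)[OF assms(1)] u_def by simp
  then have ab: "a > 0" "b > 0" unfolding u_def a_def b_def by auto
  have e: "u + 2 = a" "u + 8 = b" unfolding u_def a_def b_def by auto
  have f: "z = u*a/8" "sfun z = u^2/(4*b)" "cfun z - 1 = u*b/16" "dfun z - 1 = u^2/(8*a)"
    using uform(2-5)[OF assms(1)] unfolding u_def a_def b_def by auto
  have p: "1 / sfun z > 0" using uform(1,3)[OF assms(1)] by simp
  have o: "omg (1/sfun z) = 16/u + 1" using omg_inv_s[OF assms(1)] unfolding u_def by simp
  have o7: "omg (1/sfun z) + 7 = 8*a/u" "omg (1/sfun z) + 1 = 2*b/u"
    unfolding o aux_om[OF u0] e by auto
  have c1: "sfun (1/sfun z) = (16/u)^2/(4*(8*a/u))" using uform(3)[OF p] unfolding o7 unfolding o by simp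
  have c2: "cfun (1/sfun z) - 1 = (16/u)*(8*a/u)/16" using uform(4)[OF p] unfolding o7 unfolding o by simp
  have c3: "dfun (1/sfun z) - 1 = (16/u)^2/(8*(2*b/u))" using uform(5)[OF p] unfolding o7 unfolding o by simp
  show ?thesis
    apply (rule exI[of _ u], rule exI[of _ a], rule exI[of _ b])
    using u0 ab f c1 c2 c3 by (intro conjI) assumption+
qed

lemma s_inv_s: assumes "z > 0" shows "sfun (1 / sfun z) = 1 / z"
proof -
  obtain u a b where h: "u > 0" "a > 0" "b > 0" "z = u*a/8" "sfun z = u^2/(4*b)" "cfun z - 1 = u*b/16"
    "dfun z - 1 = u^2/(8*a)" "sfun (1/sfun z) = (16/u)^2/(4*(8*a/u))"
    "cfun (1/sfun z) - 1 = (16/u)*(8*a/u)/16" "dfun (1/sfun z) - 1 = (16/u)^2/(8*(2*b/u))"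
    using key[OF assms] by (elim exE conjE) (rule that; assumption)
  show ?thesis unfolding h(8) apply (subst h(4)) using h(1-3) by (simp add: field_simps power2_eq_square)
qed

lemma idA: assumes "z > 0" shows "(cfun z - 1) * (dfun (1 / sfun z) - 1) = 1"
proof -
  obtain u a b where h: "u > 0" "a > 0" "b > 0" "z = u*a/8" "sfun z = u^2/(4*b)" "cfun z - 1 = u*b/16"
    "dfun z - 1 = u^2/(8*a)" "sfun (1/sfun z) = (16/u)^2/(4*(8*a/u))"
    "cfun (1/sfun z) - 1 = (16/u)*(8*a/u)/16" "dfun (1/sfun z) - 1 = (16/u)^2/(8*(2*b/u))"
    using key[OF assms] by (elim exE conjE) (rule that; assumption)
  show ?thesis unfolding h(6,10) using h(1-3) by (simp add: field_simps power2_eq_square)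
qed

lemma idA': assumes "z > 0" shows "(cfun (1 / sfun z) - 1) * (dfun z - 1) = 1"
proof -
  obtain u a b where h: "u > 0" "a > 0" "b > 0" "z = u*a/8" "sfun z = u^2/(4*b)" "cfun z - 1 = u*b/16"
    "dfun z - 1 = u^2/(8*a)" "sfun (1/sfun z) = (16/u)^2/(4*(8*a/u))"
    "cfun (1/sfun z) - 1 = (16/u)*(8*a/u)/16" "dfun (1/sfun z) - 1 = (16/u)^2/(8*(2*b/u))"
    using key[OF assms] by (elim exE conjE) (rule that; assumption)
  show ?thesis unfolding h(9,7) using h(1-3) by (simp add: field_simps power2_eq_square)
qed

lemma idB: assumes "z > 0" shows "z * (dfun z - 1) = sfun z * (cfun z - 1)"
proof -
  obtain u a b where h: "u > 0" "a > 0" "b > 0" "z = u*a/8" "sfun z = u^2/(4*b)" "cfun z - 1 = u*b/16"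
    "dfun z - 1 = u^2/(8*a)" "sfun (1/sfun z) = (16/u)^2/(4*(8*a/u))"
    "cfun (1/sfun z) - 1 = (16/u)*(8*a/u)/16" "dfun (1/sfun z) - 1 = (16/u)^2/(8*(2*b/u))"
    using key[OF assms] by (elim exE conjE) (rule that; assumption)
  show ?thesis unfolding h(5-7) apply (subst h(4)) using h(1-3) by (simp add: field_simps power2_eq_square)
qed

lemma bounds: assumes "z > 0" shows "cfun z - 1 \<ge> z / 2" "cfun z > 1" "dfun z > 1"
   "sfun z \<le> z / 9" "sfun z > 0"
proof -
  define u where "u = omg z - 1"
  have u0: "u > 0" using uform[OF assms] u_def by simp
  note f = uform(2-5)[OF assms, folded u_def]
  have h: "omg z + 1 = u + 2" "omg z + 7 = u + 8" unfolding u_def by auto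
  note f = f[unfolded h]
  show "cfun z - 1 \<ge> z / 2" unfolding f(3) apply (subst f(1)) using u0 by (simp add: field_simps)
  show "cfun z > 1" using f(3) u0 by (smt (verit) divide_pos_pos mult_pos_pos)
  show "dfun z > 1" using f(4) u0 by (smt (verit) divide_pos_pos mult_pos_pos zero_less_power)
  have "u*((u-4)*(u-4)) \<ge> 0" using u0 by simp
  then show "sfun z \<le> z / 9" unfolding f(2) apply (subst f(1)) using u0
    by (simp add: field_simps) (simp add: algebra_simps power2_eq_square)
  show "sfun z > 0" unfolding f(2) using u0 by simp
qed



lemma sneg_pos: "z > 0 \<Longrightarrow> sneg z > 0"
  unfolding sneg_def using bounds(5)[of "1/z"] by simp

lemma s_sneg: "z > 0 \<Longrightarrow> sfun (sneg z) = z"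
  unfolding sneg_def using s_inv_s[of "1/z"] by simp

lemma sneg_s: "z > 0 \<Longrightarrow> sneg (sfun z) = z"
  unfolding sneg_def using s_inv_s[of z] by simp

lemma funpow_s_pos: "z > 0 \<Longrightarrow> (sfun ^^ n) z > 0"
  by (induction n) (auto intro: bounds(5))

lemma funpow_sneg_pos: "z > 0 \<Longrightarrow> (sneg ^^ n) z > 0"
  by (induction n) (auto intro: sneg_pos)

lemma siter_pos: "x > 0 \<Longrightarrow> siter i x > 0"
  unfolding siter_def using funpow_s_pos funpow_sneg_pos by auto

lemma siter_neg_nat: "siter (- int n) x = (sneg ^^ n) x"
  unfolding siter_def by auto

lemma siter_zero: "siter 0 x = x" unfolding siter_def by simp

lemma siter_one: "siter 1 x = sfun x" unfolding siter_def by simp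

lemma siter_succ: assumes "x > 0" shows "siter (i+1) x = sfun (siter i x)"
proof (cases "i \<ge> 0")
  case True
  then have "nat (i+1) = Suc (nat i)" by simp
  then show ?thesis unfolding siter_def using True by simp
next
  case False
  define m where "m = nat (-i-1)"
  have a: "siter (i+1) x = (sneg ^^ m) x"
    unfolding siter_def m_def using False by (cases "i = -1") auto
  have "nat (-i) = Suc m" unfolding m_def using False by simp
  then have b: "siter i x = sneg ((sneg ^^ m) x)" unfolding siter_def using False by simp
  show ?thesis unfolding a b using s_sneg funpow_sneg_pos assms by simp
qed

lemma siter_unique:
  assumes "x > 0" "g 0 = x" "\<And>i. g (i+1) = sfun (g i)" "\<And>i. g i > 0"
  shows "g i = siter i x"
proof (induction i rule: int_induct[where k=0])
  case base then show ?case using assms siter_zero by simp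
next
  case (step1 i) then show ?case using assms siter_succ by simp
next
  case (step2 i)
  have "g (i - 1) = sneg (sfun (g (i-1)))" using sneg_s assms(4) by simp
  also have "\<dots> = sneg (g i)" using assms(3)[of "i-1"] by simp
  also have "\<dots> = sneg (sfun (siter (i-1) x))" using step2 siter_succ[OF assms(1), of "i-1"] by simp
  also have "\<dots> = siter (i-1) x" using sneg_s siter_pos assms(1) by simp
  finally show ?case .
qed

lemma siter_refl: assumes "x > 0" shows "siter i (1 / siter a x) = 1 / siter (a - i) x"
proof -
  have p: "1 / siter a x > 0" using siter_pos[OF assms] by simp
  have "1 / siter (a - i) x = siter i (1 / siter a x)"
  proof (rule siter_unique[OF p, where g="\<lambda>i. 1 / siter (a - i) x"])
    fix i
    have "siter (a - i) x = sfun (siter (a - (i+1)) x)"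
      using siter_succ[OF assms, of "a - (i+1)"] by simp
    then show "1 / siter (a - (i + 1)) x = sfun (1 / siter (a - i) x)"
      using s_inv_s siter_pos[OF assms] by simp
    show "1 / siter (a - i) x > 0" using siter_pos[OF assms] by simp
  qed simp
  then show ?thesis by simp
qed

lemma prodc_m1: "prodc h (-1) = 1" unfolding prodc_def by simp

lemma prodc_step: assumes "\<And>i. h i \<noteq> 0" shows "prodc h j = prodc h (j-1) * h j"
proof -
  consider "j \<ge> 1" | "j = 0" | "j = -1" | "j \<le> -2" by linarith
  then show ?thesis
  proof cases
    case 1
    then have "{0..j} = insert j {0..j-1}" by auto
    then show ?thesis unfolding prodc_def using 1 by (simp add: mult.commute)
  next
    case 2 then show ?thesis unfolding prodc_def by simp
  next
    case 3 then show ?thesis unfolding prodc_def using assms by simp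
  next
    case 4
    then have e: "{j..-1} = insert j {j+1..-1}" by auto
    have "prodc h (j-1) = inverse (h j) * prodc h j"
      unfolding prodc_def using 4 by (simp add: e)
    then show ?thesis using assms[of j] by simp
  qed
qed

lemma prodc_unique:
  assumes "\<And>i. h i \<noteq> 0" "Q (-1) = 1" "\<And>j. Q j = Q (j-1) * h j"
  shows "Q j = prodc h j"
proof (induction j rule: int_induct[where k="-1"])
  case base then show ?case using assms(2) prodc_m1 by simp
next
  case (step1 i) then show ?case using assms(3)[of "i+1"] prodc_step[where j="i+1", OF assms(1)] by simp
next
  case (step2 i)
  have "Q i = Q (i-1) * h i" "prodc h i = prodc h (i-1) * h i"
    using assms(3)[of i] prodc_step[where j=i, OF assms(1)] by auto
  then show ?case using step2 assms(1)[of i] by simp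
qed

lemma prodc_pos: assumes "\<And>i. h i > 0" shows "prodc h j > 0"
  unfolding prodc_def using assms by (auto intro!: prod_pos)

lemma prodc_nz: assumes "\<And>i. h i \<noteq> 0" shows "prodc h j \<noteq> 0"
  unfolding prodc_def using assms by auto

lemma prodc_refl:
  assumes "\<And>i. h i \<noteq> 0" "\<And>i. h' i = inverse (h (b - i))"
  shows "prodc h' j = prodc h (b - j - 1) / prodc h b"
proof -
  have nz: "\<And>i. h' i \<noteq> 0" using assms by simp
  have "(\<lambda>j. prodc h (b - j - 1) / prodc h b) j = prodc h' j"
  proof (rule prodc_unique[OF nz])
    show "prodc h (b - - 1 - 1) / prodc h b = 1" using prodc_nz[OF assms(1)] by simp
    fix j
    have "prodc h (b - (j - 1) - 1) = prodc h (b - j - 1) * h (b - j)"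
      using prodc_step[where j="b - j", OF assms(1)] by simp
    then show "prodc h (b - j - 1) / prodc h b = prodc h (b - (j - 1) - 1) / prodc h b * h' j"
      using assms(1)[of "b-j"] assms(2)[of j] by simp
  qed
  then show ?thesis by simp
qed



lemma telescope:
  fixes m f :: "int \<Rightarrow> real"
  assumes "\<And>k. m (k+1) - m k = f k" "a \<le> b"
  shows "m b - m a = sum f {a..<b}"
  using assms(2)
proof (induction b rule: int_ge_induct)
  case base then show ?case by simp
next
  case (step i)
  have "{a..<i+1} = insert i {a..<i}" using step by auto
  then have "sum f {a..<i+1} = f i + sum f {a..<i}" by simp
  then show ?case using step assms(1)[of i] by simp
qed

lemma filt_nat_neg: "filterlim (\<lambda>k::int. nat (-k)) at_top at_bot"
  unfolding filterlim_at_top eventually_at_bot_linorder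
  by (intro allI, rule_tac x="- int Z" in exI) auto

lemma filt_neg1: "filterlim (\<lambda>k::int. -k) at_bot at_top"
  unfolding filterlim_at_bot eventually_at_top_linorder
  by (intro allI, rule_tac x="- Z" in exI) auto

lemma filt_neg2: "filterlim (\<lambda>k::int. -k) at_top at_bot"
  unfolding filterlim_at_top eventually_at_bot_linorder
  by (intro allI, rule_tac x="- Z" in exI) auto

lemma m_unique:
  fixes m1 m2 f :: "int \<Rightarrow> real"
  assumes "\<And>k. m1 (k+1) - m1 k = f k" "(m1 \<longlongrightarrow> 0) at_bot"
          "\<And>k. m2 (k+1) - m2 k = f k" "(m2 \<longlongrightarrow> 0) at_bot"
  shows "m1 = m2"
proof -
  define d where "d k = m1 k - m2 k" for k
  have dk: "d (k+1) = d k" for k using assms(1,3)[of k] unfolding d_def by simp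
  have c: "d k = d 0" for k
  proof (induction k rule: int_induct[where k=0])
    case (step2 i) then show ?case using dk[of "i-1"] by simp
  qed (use dk in simp_all)
  have "(d \<longlongrightarrow> 0 - 0) at_bot" unfolding d_def[abs_def] by (intro tendsto_diff assms(2,4))
  then have L: "(d \<longlongrightarrow> 0) at_bot" by simp
  define c0 where "c0 = d 0"
  have E: "d = (\<lambda>k. c0)" using c unfolding c0_def by auto
  have "((\<lambda>k::int. c0) \<longlongrightarrow> 0) at_bot" using L unfolding E .
  then have "c0 = 0" by (simp add: tendsto_const_iff)
  then have "d 0 = 0" unfolding c0_def by simp
  then have "d 0 = 0" by (simp add: tendsto_const_iff)
  then show ?thesis using c unfolding d_def by (intro ext) (metis eq_iff_diff_eq_0)
qed

lemma m_exists:
  fixes f :: "int \<Rightarrow> real"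
  assumes sm: "summable (\<lambda>n. f (- int n - 1))"
  shows "\<exists>m. (\<forall>k. m (k+1) - m k = f k) \<and> (m \<longlongrightarrow> 0) at_bot"
proof -
  define F where "F n = f (- int n - 1)" for n
  define S where "S = suminf F"
  define G where "G N = (\<Sum>n<N. F n)" for N
  define T where "T k = sum f {k..<0}" for k
  define U where "U k = sum f {0..<k}" for k
  define m where "m k = S + U k - T k" for k
  have dU: "U (k+1) - U k = (if k \<ge> 0 then f k else 0)" for k
  proof (cases "k \<ge> 0")
    case True
    then have "{0..<k+1} = insert k {0..<k}" by auto
    then show ?thesis unfolding U_def using True by simp
  qed (simp add: U_def)
  have dT: "T k - T (k+1) = (if k < 0 then f k else 0)" for k
  proof (cases "k < 0")
    case True
    then have "{k..<0} = insert k {k+1..<0}" by auto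
    then show ?thesis unfolding T_def using True by simp
  qed (simp add: T_def)
  have diff: "m (k+1) - m k = f k" for k
    using dU[of k] dT[of k] unfolding m_def by (auto split: if_splits)
  have TG: "T (- int N) = G N" for N
  proof (induction N)
    case 0 then show ?case unfolding T_def G_def by simp
  next
    case (Suc N)
    have "T (- int N - 1) - T (- int N - 1 + 1) = f (- int N - 1)" using dT[of "- int N - 1"] by simp
    then have h: "T (- int N - 1) = f (- int N - 1) + G N" using Suc by simp
    have eq: "- int (Suc N) = - int N - 1" by simp
    show ?case unfolding eq h unfolding G_def F_def by simp
  qed
  have Glim: "G \<longlonglongrightarrow> S" using summable_LIMSEQ[OF sm] unfolding G_def S_def F_def[abs_def] .
  have "((\<lambda>k. G (nat (-k))) \<longlongrightarrow> S) at_bot" by (rule filterlim_compose[OF Glim filt_nat_neg])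
  then have l1: "((\<lambda>k. S - G (nat (-k))) \<longlongrightarrow> S - S) at_bot" by (intro tendsto_diff tendsto_const)
  have ev: "eventually (\<lambda>k. S - G (nat (-k)) = m k) at_bot"
    unfolding eventually_at_bot_linorder
  proof (intro exI[of _ 0] allI impI)
    fix k :: int assume "k \<le> 0"
    then have "T k = G (nat (-k))" using TG[of "nat (-k)"] by simp
    moreover have "U k = 0" using \<open>k \<le> 0\<close> unfolding U_def by simp
    ultimately show "S - G (nat (-k)) = m k" unfolding m_def by simp
  qed
  have "(m \<longlongrightarrow> 0) at_bot" using l1 tendsto_cong[OF ev] by simp
  then show ?thesis using diff by blast
qed

lemma m_ex1:
  fixes f :: "int \<Rightarrow> real"
  assumes "summable (\<lambda>n. f (- int n - 1))"
  shows "\<exists>!m. (\<forall>k. m (k+1) - m k = f k) \<and> (m \<longlongrightarrow> 0) at_bot"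
  using m_exists[OF assms] m_unique by blast

lemma n_ex1:
  fixes g :: "int \<Rightarrow> real"
  assumes sm: "summable (\<lambda>n. g (int n))"
  shows "\<exists>!n. (\<forall>k. n k - n (k+1) = g k) \<and> (n \<longlongrightarrow> 0) at_top"
proof -
  define f where "f k = g (-k-1)" for k
  have "summable (\<lambda>n. f (- int n - 1))" unfolding f_def using sm by simp
  then obtain m where m: "\<forall>k. m (k+1) - m k = f k" "(m \<longlongrightarrow> 0) at_bot" using m_exists by blast
  have e1: "(\<lambda>k. m (-k)) k - (\<lambda>k. m (-k)) (k+1) = g k" for k
    using m(1)[rule_format, of "-k-1"] unfolding f_def by simp
  have e2: "((\<lambda>k. m (-k)) \<longlongrightarrow> 0) at_top" by (rule filterlim_compose[OF m(2) filt_neg1])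
  show ?thesis
  proof (rule ex1I[of _ "\<lambda>k. m (-k)"])
    show "(\<forall>k. m (- k) - m (- (k + 1)) = g k) \<and> ((\<lambda>k. m (- k)) \<longlongrightarrow> 0) at_top" using e1 e2 by simp
    fix n assume n: "(\<forall>k. n k - n (k + 1) = g k) \<and> (n \<longlongrightarrow> 0) at_top"
    have a: "n (- (k+1)) - n (-k) = f k" for k using n[THEN conjunct1, rule_format, of "-k-1"] unfolding f_def by simp
    have b: "((\<lambda>k. n (-k)) \<longlongrightarrow> 0) at_bot" using filterlim_compose[OF n[THEN conjunct2] filt_neg2] .
    have "(\<lambda>k. n (-k)) = m" by (rule m_unique[OF _ b m(1)[rule_format] m(2)]) (use a in simp)
    then show "n = (\<lambda>k. m (-k))" by (metis minus_minus)
  qed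
qed



definition PC :: "real \<Rightarrow> int \<Rightarrow> real" where "PC x = prodc (\<lambda>i. cj i x - 1)"
definition PD :: "real \<Rightarrow> int \<Rightarrow> real" where "PD x = prodc (\<lambda>i. dj i x - 1)"

lemma cj_pos: "x > 0 \<Longrightarrow> cj i x - 1 > 0" unfolding cj_def using bounds(2) siter_pos by simp
lemma dj_pos: "x > 0 \<Longrightarrow> dj i x - 1 > 0" unfolding dj_def using bounds(3) siter_pos by simp

lemma PC_pos: "x > 0 \<Longrightarrow> PC x j > 0" unfolding PC_def by (rule prodc_pos) (rule cj_pos)
lemma PD_pos: "x > 0 \<Longrightarrow> PD x j > 0" unfolding PD_def by (rule prodc_pos) (rule dj_pos)

lemma refl_c: assumes "x > 0"
  shows "PC (1 / siter a x) j = PD x (a - 2 - j) / PD x (a - 1)"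
proof -
  have "PC (1 / siter a x) j = PD x (a - 1 - j - 1) / PD x (a - 1)"
    unfolding PC_def PD_def
  proof (rule prodc_refl)
    show "dj i x - 1 \<noteq> 0" for i using dj_pos[OF assms, of i] by simp
    fix i
    have "siter (a - i) x = sfun (siter (a - 1 - i) x)" using siter_succ[OF assms, of "a - 1 - i"] by simp
    then have "cj i (1 / siter a x) = cfun (1 / sfun (siter (a - 1 - i) x))"
      unfolding cj_def siter_refl[OF assms] by simp
    then show "cj i (1 / siter a x) - 1 = inverse (dj (a - 1 - i) x - 1)"
      using idA'[OF siter_pos[OF assms, of "a-1-i"]] unfolding dj_def
      by (metis inverse_unique mult.commute)
  qed
  moreover have "a - 1 - j - 1 = a - 2 - j" by simp
  ultimately show ?thesis by metis
qed

lemma refl_d: assumes "x > 0"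
  shows "PD (1 / siter a x) j = PC x (a - 2 - j) / PC x (a - 1)"
proof -
  have "PD (1 / siter a x) j = PC x (a - 1 - j - 1) / PC x (a - 1)"
    unfolding PC_def PD_def
  proof (rule prodc_refl)
    show "cj i x - 1 \<noteq> 0" for i using cj_pos[OF assms, of i] by simp
    fix i
    have "siter (a - i) x = sfun (siter (a - 1 - i) x)" using siter_succ[OF assms, of "a - 1 - i"] by simp
    then have "dj i (1 / siter a x) = dfun (1 / sfun (siter (a - 1 - i) x))"
      unfolding dj_def siter_refl[OF assms] by simp
    then show "dj i (1 / siter a x) - 1 = inverse (cj (a - 1 - i) x - 1)"
      using idA[OF siter_pos[OF assms, of "a-1-i"]] unfolding cj_def
      by (metis inverse_unique mult.commute)
  qed
  moreover have "a - 1 - j - 1 = a - 2 - j" by simp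
  ultimately show ?thesis by metis
qed

lemma sneg_ge: "z > 0 \<Longrightarrow> sneg z \<ge> 9 * z"
proof -
  assume z: "z > 0"
  have "sfun (1/z) \<le> 1/z/9" "sfun (1/z) > 0" using bounds(4,5)[of "1/z"] z by auto
  then show ?thesis unfolding sneg_def using z by (simp add: field_simps)
qed

lemma sneg_pow_ge: "z > 0 \<Longrightarrow> (sneg ^^ n) z \<ge> 9^n * z"
proof (induction n)
  case (Suc n)
  have "9 ^ Suc n * z = 9 * (9^n * z)" by simp
  also have "\<dots> \<le> 9 * (sneg ^^ n) z" using Suc by simp
  also have "\<dots> \<le> sneg ((sneg ^^ n) z)" using sneg_ge funpow_sneg_pos Suc by blast
  finally show ?case by simp
qed simp

lemma PC_summable: assumes x: "x > 0" shows "summable (\<lambda>n. PC x (- int n - 1))"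
proof -
  obtain N where N: "4 / x < 9 ^ N" using real_arch_pow[of "9::real" "4/x"] by auto
  show ?thesis
  proof (rule summable_ratio_test[where c="1/2" and N=N])
    fix n assume n: "n \<ge> N"
    have nz: "cj i x - 1 \<noteq> 0" for i using cj_pos[OF x, of i] by linarith
    have st0: "PC x (- int n - 1) = PC x (- int n - 1 - 1) * (cj (- int n - 1) x - 1)"
      unfolding PC_def by (rule prodc_step[OF nz])
    have e2: "- int n - 1 - 1 = - int n - 2" by simp
    have st: "PC x (- int n - 1) = PC x (- int n - 2) * (cj (- int n - 1) x - 1)"
      using st0 unfolding e2 .
    have e3: "- int (Suc n) = - int n - 1" by simp
    have "cj (- int n - 1) x - 1 \<ge> siter (- int (Suc n)) x / 2"
      unfolding cj_def e3 by (rule bounds(1)[OF siter_pos[OF x]])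
    moreover have "siter (- int (Suc n)) x \<ge> 9 ^ Suc n * x"
      unfolding siter_neg_nat using sneg_pow_ge[OF x] .
    moreover have "9 ^ Suc n * x \<ge> 9 ^ N * x" using x n by (intro mult_right_mono power_increasing) auto
    moreover have "9 ^ N * x > 4" using N x by (simp add: field_simps)
    ultimately have h: "cj (- int n - 1) x - 1 \<ge> 2" by linarith
    have p1: "PC x (- int n - 2) > 0" using PC_pos[OF x] by simp
    have e4: "- int (Suc n) - 1 = - int n - 2" by simp
    have "PC x (- int (Suc n) - 1) = PC x (- int n - 2)" unfolding e4 ..
    moreover have "PC x (- int n - 2) \<le> 1/2 * PC x (- int n - 1)"
      unfolding st using h p1 by (simp add: algebra_simps)
    ultimately show "norm (PC x (- int (Suc n) - 1)) \<le> 1 / 2 * norm (PC x (- int n - 1))"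
      using PC_pos[OF x, of "- int n - 2"] PC_pos[OF x, of "- int n - 1"] by simp
  qed simp
qed

lemma PD_as_PC: assumes x: "x > 0" shows "PD x j = PC (1/x) (- 2 - j)"
proof -
  have "PD (1 / siter 0 (1/x)) j = PC (1/x) (0 - 2 - j) / PC (1/x) (0 - 1)"
    using refl_d[of "1/x" 0 j] x by simp
  then have "PD x j = PC (1/x) (- 2 - j) / PC (1/x) (- 1)" unfolding siter_zero using x by simp
  moreover have "PC (1/x) (-1) = 1" unfolding PC_def by (rule prodc_m1)
  ultimately show ?thesis by simp
qed

lemma PD_summable: assumes x: "x > 0" shows "summable (\<lambda>n. PD x (int n))"
proof -
  have "summable (\<lambda>n. PC (1/x) (- int (Suc n) - 1))"
    using PC_summable[of "1/x"] x summable_Suc_iff[where f="\<lambda>n. PC (1/x) (- int n - 1)"] by simp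
  moreover have "PC (1/x) (- int (Suc n) - 1) = PD x (int n)" for n
  proof -
    have "- 2 - int n = - int (Suc n) - 1" by simp
    then show ?thesis using PD_as_PC[OF x, of "int n"] by simp
  qed
  ultimately show ?thesis by simp
qed

lemma mdef_diff: assumes "x > 0" shows "mdef x (k+1) - mdef x k = PC x k"
proof -
  have "\<exists>!m. (\<forall>k. m (k + 1) - m k = prodc (\<lambda>i. cj i x - 1) k) \<and> (m \<longlongrightarrow> 0) at_bot"
    using m_ex1[of "PC x"] PC_summable[OF assms] unfolding PC_def by simp
  from theI'[OF this] show ?thesis unfolding mdef_def PC_def by blast
qed

lemma ndef_diff: assumes "x > 0" shows "ndef x k - ndef x (k+1) = x * PD x k"
proof -
  have "summable (\<lambda>n. x * PD x (int n))" using PD_summable[OF assms] by (rule summable_mult)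
  then have "\<exists>!n. (\<forall>k. n k - n (k + 1) = x * prodc (\<lambda>i. dj i x - 1) k) \<and> (n \<longlongrightarrow> 0) at_top"
    using n_ex1[of "\<lambda>k. x * PD x k"] unfolding PD_def by simp
  from theI'[OF this] show ?thesis unfolding ndef_def PD_def by blast
qed

lemma Mina_formula: assumes "x > 0"
  shows "Mina p r x = x * sum (PD x) {- int p..<int r} / sum (PC x) {- int p..<int r}"
proof -
  have a: "mdef x (int r) - mdef x (- int p) = sum (PC x) {- int p..<int r}"
    by (rule telescope[where f="PC x"]) (use mdef_diff[OF assms] in simp_all)
  have "ndef x (int r) - ndef x (- int p) = sum (\<lambda>k. - (x * PD x k)) {- int p..<int r}"
  proof (rule telescope[where f="\<lambda>k. - (x * PD x k)"])
    show "ndef x (k + 1) - ndef x k = - (x * PD x k)" for k using ndef_diff[OF assms, of k] by linarith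
  qed simp
  then have b: "ndef x (- int p) - ndef x (int r) = x * sum (PD x) {- int p..<int r}"
    by (simp add: sum_negf sum_distrib_left)
  show ?thesis unfolding Mina_def a b ..
qed

lemma sum_flip: fixes g :: "int \<Rightarrow> real"
  shows "sum (\<lambda>j. g (lo + hi - 1 - j)) {lo..<hi} = sum g {lo..<hi}"
  by (rule sum.reindex_bij_witness[where i="\<lambda>j. lo + hi - 1 - j" and j="\<lambda>j. lo + hi - 1 - j"
      and g="\<lambda>j. g (lo + hi - 1 - j)" and h=g and S="{lo..<hi}" and T="{lo..<hi}"]) simp_all

theorem mainTheorem18:
  fixes k :: nat and x :: real
  assumes "k \<ge> 1" and "x > 0"
  shows "Mina k k x * Mina k k (1 / sfun x) = 1
         \<and> Mina (k + 1) k x * Mina (k + 1) k (inverse x) = 1"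
proof
  have x: "x > 0" by fact
  have Ane: "{- int k..<int k} \<noteq> {}" using assms(1) by auto
  have Ane2: "{- int (k+1)..<int k} \<noteq> {}" by auto
  define y where "y = 1 / sfun x"
  have y: "y > 0" "y = 1 / siter 1 x" unfolding y_def siter_one using bounds(5)[OF x] by auto
  define A where "A = {- int k..<int k}"
  have fA: "finite A" "A \<noteq> {}" unfolding A_def using Ane by auto
  define SC where "SC = sum (PC x) A"
  define SD where "SD = sum (PD x) A"
  have SCp: "SC > 0" unfolding SC_def using fA PC_pos[OF x] by (intro sum_pos) auto
  have SDp: "SD > 0" unfolding SD_def using fA PD_pos[OF x] by (intro sum_pos) auto
  have "sum (PC y) A = sum (\<lambda>j. PD x (- int k + int k - 1 - j)) A / PD x 0"
    unfolding y(2) refl_c[OF x] by (simp add: sum_divide_distrib algebra_simps)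
  then have c1: "sum (PC y) A = SD / (dfun x - 1)"
    unfolding A_def sum_flip unfolding SD_def[unfolded A_def, symmetric] unfolding PD_def prodc_def dj_def by (simp add: siter_zero)
  have "sum (PD y) A = sum (\<lambda>j. PC x (- int k + int k - 1 - j)) A / PC x 0"
    unfolding y(2) refl_d[OF x] by (simp add: sum_divide_distrib algebra_simps)
  then have d1: "sum (PD y) A = SC / (cfun x - 1)"
    unfolding A_def sum_flip unfolding SC_def[unfolded A_def, symmetric] unfolding PC_def prodc_def cj_def by (simp add: siter_zero)
  have cpos: "cfun x - 1 > 0" "dfun x - 1 > 0" using bounds(2,3)[OF x] by auto
  have B: "x * (dfun x - 1) = sfun x * (cfun x - 1)" by (rule idB[OF x])
  have sp: "sfun x > 0" using bounds(5)[OF x] .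
  have BB: "SC*(SD*(x*(dfun x - 1))) = SC*(SD*(sfun x*(cfun x - 1)))" using B by simp
  show "Mina k k x * Mina k k (1 / sfun x) = 1"
    unfolding y_def[symmetric] Mina_formula[OF x] Mina_formula[OF y(1)] A_def[symmetric]
      c1 d1 SC_def[symmetric] SD_def[symmetric]
    using SCp SDp cpos sp BB unfolding y_def by (simp add: field_simps)
next
  have x: "x > 0" by fact
  define y where "y = inverse x"
  have y: "y > 0" "y = 1 / siter 0 x" unfolding y_def siter_zero using x by (auto simp: field_simps)
  define A where "A = {- int (k+1)..<int k}"
  have fA: "finite A" "A \<noteq> {}" unfolding A_def by auto
  define SC where "SC = sum (PC x) A"
  define SD where "SD = sum (PD x) A"
  have SCp: "SC > 0" unfolding SC_def using fA PC_pos[OF x] by (intro sum_pos) auto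
  have SDp: "SD > 0" unfolding SD_def using fA PD_pos[OF x] by (intro sum_pos) auto
  have "sum (PC y) A = sum (\<lambda>j. PD x (- int (k+1) + int k - 1 - j)) A / PD x (-1)"
    unfolding y(2) refl_c[OF x] by (simp add: sum_divide_distrib algebra_simps)
  then have c1: "sum (PC y) A = SD"
    unfolding A_def sum_flip unfolding SD_def[unfolded A_def, symmetric] unfolding PD_def prodc_m1 by simp
  have "sum (PD y) A = sum (\<lambda>j. PC x (- int (k+1) + int k - 1 - j)) A / PC x (-1)"
    unfolding y(2) refl_d[OF x] by (simp add: sum_divide_distrib algebra_simps)
  then have d1: "sum (PD y) A = SC"
    unfolding A_def sum_flip unfolding SC_def[unfolded A_def, symmetric] unfolding PC_def prodc_m1 by simp
  show "Mina (k + 1) k x * Mina (k + 1) k (inverse x) = 1"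
    unfolding y_def[symmetric] Mina_formula[OF x] Mina_formula[OF y(1)] A_def[symmetric]
      c1 d1 SC_def[symmetric] SD_def[symmetric]
    using SCp SDp x unfolding y_def by (simp add: field_simps)
qed

end
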